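(* For every integer $n\ge 4$, $\mathrm{mob}(L(K_n))=n-2$.
   Context: $L(K_n)$ is the line graph of the complete graph $K_n$: its vertices are the edges of $K_n$, two being adjacent iff they share an endpoint. A set $S$ of vertices is a general position set if no three distinct vertices of $S$ lie on a common shortest path. Place one robot on each vertex of a general position set $S$; robots move one at a time, and a move is legal if a robot moves to an adjacent unoccupied vertex and the new set of occupied vertices is again a general position set. $S$ is a mobile general position set if some finite sequence of legal moves results in every vertex being occupied by some robot at some moment. $\mathrm{mob}$ of a graph is the maximum cardinality of a mobile general position set of it. *)

theory Defs
  imports Main
begin

fun walk :: "'a set \<Rightarrow> ('a \<Rightarrow> 'a \<Rightarrow> bool) \<Rightarrow> 'a list \<Rightarrow> bool" where
  "walk V E [] = False"
| "walk V E [x] = (x \<in> V)"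
| "walk V E (x # y # xs) = (x \<in> V \<and> E x y \<and> walk V E (y # xs))"

definition gdist :: "'a set \<Rightarrow> ('a \<Rightarrow> 'a \<Rightarrow> bool) \<Rightarrow> 'a \<Rightarrow> 'a \<Rightarrow> nat" where
  "gdist V E u v = (LEAST k. \<exists>xs. walk V E xs \<and> hd xs = u \<and> last xs = v \<and> length xs = Suc k)"

definition shortest_path :: "'a set \<Rightarrow> ('a \<Rightarrow> 'a \<Rightarrow> bool) \<Rightarrow> 'a list \<Rightarrow> bool" where
  "shortest_path V E P \<longleftrightarrow> walk V E P \<and> distinct P \<and>
     length P = Suc (gdist V E (hd P) (last P))"

definition gp_set :: "'a set \<Rightarrow> ('a \<Rightarrow> 'a \<Rightarrow> bool) \<Rightarrow> 'a set \<Rightarrow> bool" where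
  "gp_set V E S \<longleftrightarrow> S \<subseteq> V \<and>
     (\<forall>x\<in>S. \<forall>y\<in>S. \<forall>z\<in>S. x \<noteq> y \<and> y \<noteq> z \<and> x \<noteq> z \<longrightarrow>
        \<not> (\<exists>P. shortest_path V E P \<and> x \<in> set P \<and> y \<in> set P \<and> z \<in> set P))"

definition legal_move :: "'a set \<Rightarrow> ('a \<Rightarrow> 'a \<Rightarrow> bool) \<Rightarrow> 'a set \<Rightarrow> 'a set \<Rightarrow> bool" where
  "legal_move V E S S' \<longleftrightarrow> (\<exists>u v. u \<in> S \<and> v \<in> V \<and> v \<notin> S \<and> E u v \<and>
       S' = insert v (S - {u}) \<and> gp_set V E S')"

definition mobile_gp_set :: "'a set \<Rightarrow> ('a \<Rightarrow> 'a \<Rightarrow> bool) \<Rightarrow> 'a set \<Rightarrow> bool" where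
  "mobile_gp_set V E S \<longleftrightarrow> gp_set V E S \<and>
     (\<exists>ts :: 'a set list. ts \<noteq> [] \<and> hd ts = S \<and>
        (\<forall>i. Suc i < length ts \<longrightarrow> legal_move V E (ts ! i) (ts ! Suc i)) \<and>
        V \<subseteq> \<Union> (set ts))"

definition mob :: "'a set \<Rightarrow> ('a \<Rightarrow> 'a \<Rightarrow> bool) \<Rightarrow> nat" where
  "mob V E = Max (card ` {S. mobile_gp_set V E S})"

definition Kn_edges :: "nat \<Rightarrow> nat set set" where
  "Kn_edges n = {{a, b} | a b. a < n \<and> b < n \<and> a \<noteq> b}"

definition line_adj :: "nat set \<Rightarrow> nat set \<Rightarrow> bool" where
  "line_adj e f \<longleftrightarrow> e \<noteq> f \<and> e \<inter> f \<noteq> {}"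

end

theory Submission
  imports Defs
begin


definition pf :: "nat set set \<Rightarrow> bool" where
  "pf S \<longleftrightarrow> (\<forall>a b c d. {a,b}\<in>S \<longrightarrow> {b,c}\<in>S \<longrightarrow> {c,d}\<in>S \<longrightarrow> a\<noteq>b \<longrightarrow> b\<noteq>c \<longrightarrow> c\<noteq>d
     \<longrightarrow> a\<noteq>c \<longrightarrow> a\<noteq>d \<longrightarrow> b\<noteq>d \<longrightarrow> False)"

definition edges_in :: "nat set \<Rightarrow> nat set set \<Rightarrow> bool" where
  "edges_in X S \<longleftrightarrow> (\<forall>e\<in>S. \<exists>a b. a \<noteq> b \<and> a \<in> X \<and> b \<in> X \<and> e = {a,b})"

definition center :: "nat set set \<Rightarrow> nat \<Rightarrow> bool" where
  "center S c \<longleftrightarrow> (\<forall>t w. {c,t} \<in> S \<longrightarrow> {t,w} \<in> S \<longrightarrow> w = c)"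

definition nbs :: "nat set set \<Rightarrow> nat \<Rightarrow> nat set" where
  "nbs S c = {t. {c,t} \<in> S}"

definition touch :: "nat set set \<Rightarrow> nat set \<Rightarrow> nat set set" where
  "touch S Y = {e \<in> S. e \<inter> Y \<noteq> {}}"

lemma pfD: "pf S \<Longrightarrow> {a,b}\<in>S \<Longrightarrow> {b,c}\<in>S \<Longrightarrow> {c,d}\<in>S \<Longrightarrow> a\<noteq>b \<Longrightarrow> b\<noteq>c \<Longrightarrow> c\<noteq>d
     \<Longrightarrow> a\<noteq>c \<Longrightarrow> a\<noteq>d \<Longrightarrow> b\<noteq>d \<Longrightarrow> False"
  unfolding pf_def
  apply (drule spec[of _ a], drule spec[of _ b], drule spec[of _ c], drule spec[of _ d])
  by blast

lemma pf_mono: assumes "pf S" "T \<subseteq> S" shows "pf T"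
  unfolding pf_def
proof (intro allI impI)
  fix a b c d assume h: "{a,b}\<in>T" "{b,c}\<in>T" "{c,d}\<in>T" "a\<noteq>b" "b\<noteq>c" "c\<noteq>d" "a\<noteq>c" "a\<noteq>d" "b\<noteq>d"
  show False using pfD[OF assms(1), of a b c d] h assms(2) by blast
qed

lemma edges_inD: "edges_in X S \<Longrightarrow> {a,b} \<in> S \<Longrightarrow> a \<noteq> b \<and> a \<in> X \<and> b \<in> X"
proof -
  assume a: "edges_in X S" "{a,b} \<in> S"
  then obtain x y where "x \<noteq> y" "x \<in> X" "y \<in> X" "{a,b} = {x,y}" unfolding edges_in_def by blast
  thus ?thesis by (auto simp: doubleton_eq_iff)
qed

lemma edges_in_mono: "edges_in X S \<Longrightarrow> T \<subseteq> S \<Longrightarrow> edges_in X T"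
  unfolding edges_in_def by blast

lemma edges_in_finite: assumes "finite X" "edges_in X S" shows "finite S"
proof -
  have "S \<subseteq> Pow X"
  proof
    fix e assume "e \<in> S"
    then obtain a b where "a \<in> X" "b \<in> X" "e = {a,b}" using assms(2) unfolding edges_in_def by metis
    thus "e \<in> Pow X" by auto
  qed
  thus ?thesis using assms(1) by (metis finite_Pow_iff finite_subset)
qed

lemma nbs_sub: "edges_in X S \<Longrightarrow> nbs S c \<subseteq> X"
  unfolding nbs_def using edges_inD by blast

lemma star_touch:
  assumes "edges_in X S" "center S c"
  shows "touch S (insert c (nbs S c)) = (\<lambda>t. {c,t}) ` nbs S c"
proof
  show "touch S (insert c (nbs S c)) \<subseteq> (\<lambda>t. {c,t}) ` nbs S c"
  proof
    fix e assume e: "e \<in> touch S (insert c (nbs S c))"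
    then obtain a b where ab: "e = {a,b}" "a \<noteq> b" "e \<in> S"
      using assms(1) unfolding touch_def edges_in_def by blast
    from e have "a \<in> insert c (nbs S c) \<or> b \<in> insert c (nbs S c)" unfolding touch_def ab by auto
    thus "e \<in> (\<lambda>t. {c,t}) ` nbs S c"
    proof
      assume "a \<in> insert c (nbs S c)"
      then consider "a = c" | "{c,a} \<in> S" unfolding nbs_def by auto
      thus ?thesis
      proof cases
        case 1 thus ?thesis using ab unfolding nbs_def by auto
      next
        case 2 hence "b = c" using assms(2) ab unfolding center_def by blast
        thus ?thesis using 2 ab unfolding nbs_def by (auto simp: insert_commute)
      qed
    next
      assume "b \<in> insert c (nbs S c)"
      then consider "b = c" | "{c,b} \<in> S" unfolding nbs_def by auto
      thus ?thesis
      proof cases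
        case 1 thus ?thesis using ab unfolding nbs_def by (auto simp: insert_commute)
      next
        case 2 hence "a = c" using assms(2) ab unfolding center_def by (metis insert_commute)
        thus ?thesis using 2 ab unfolding nbs_def by (auto simp: insert_commute)
      qed
    qed
  qed
next
  show "(\<lambda>t. {c,t}) ` nbs S c \<subseteq> touch S (insert c (nbs S c))"
    unfolding touch_def nbs_def by auto
qed

lemma remove_split:
  assumes "finite X" "edges_in X S" "pf S" "Y \<subseteq> X"
  shows "card S = card (touch S Y) + card (S - touch S Y)"
    "edges_in (X - Y) (S - touch S Y)" "pf (S - touch S Y)"
proof -
  have fS: "finite S" using assms edges_in_finite by blast
  show "card S = card (touch S Y) + card (S - touch S Y)"
  proof -
    have "touch S Y \<subseteq> S" unfolding touch_def by blast
    thus ?thesis using fS card_Diff_subset[of "touch S Y" S] card_mono[of S "touch S Y"]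
      finite_subset[of "touch S Y" S] by simp
  qed
  show "edges_in (X - Y) (S - touch S Y)"
    unfolding edges_in_def
  proof
    fix e assume e: "e \<in> S - touch S Y"
    then obtain a b where ab: "a \<noteq> b" "a \<in> X" "b \<in> X" "e = {a,b}" using assms(2) unfolding edges_in_def by blast
    have "e \<inter> Y = {}" using e unfolding touch_def by blast
    thus "\<exists>a b. a \<noteq> b \<and> a \<in> X - Y \<and> b \<in> X - Y \<and> e = {a, b}" using ab by blast
  qed
  show "pf (S - touch S Y)" using assms(3) pf_mono by blast
qed



lemma edge_tri:
  assumes pf: "pf S" and ei: "edges_in X S" and pq: "{p,q} \<in> S"
  shows "(\<exists>r. {p,r}\<in>S \<and> {q,r}\<in>S) \<or> center S p \<or> center S q"
proof (rule ccontr)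
  assume nt: "\<not> ((\<exists>r. {p,r}\<in>S \<and> {q,r}\<in>S) \<or> center S p \<or> center S q)"
  have ne: "\<And>a b. {a,b} \<in> S \<Longrightarrow> a \<noteq> b" using edges_inD[OF ei] by blast
  have pq': "p \<noteq> q" using ne pq by blast
  show False
  proof (cases "\<exists>s. s \<noteq> q \<and> {p,s} \<in> S")
    case True
    then obtain s where s: "s \<noteq> q" "{p,s} \<in> S" by blast
    have "center S p" unfolding center_def
    proof (intro allI impI)
      fix t w assume tw: "{p,t} \<in> S" "{t,w} \<in> S"
      show "w = p"
      proof (rule ccontr)
        assume wp: "w \<noteq> p"
        show False
        proof (cases "t = q")
          case True
          have "w \<noteq> s" using nt tw s True by (metis insert_commute)
          moreover have "w \<noteq> q" using ne tw True by blast
          moreover have "s \<noteq> p" using ne s by blast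
          ultimately show False using pfD[OF pf, of w q p s] tw True s pq wp pq'
            by (metis insert_commute)
        next
          case False
          have "w \<noteq> q" using nt tw by (metis insert_commute)
          moreover have "w \<noteq> t" "t \<noteq> p" using ne tw by blast+
          ultimately show False using pfD[OF pf, of w t p q] tw False pq wp pq'
            by (metis insert_commute)
        qed
      qed
    qed
    thus False using nt by blast
  next
    case False
    have "center S q" unfolding center_def
    proof (intro allI impI)
      fix t w assume tw: "{q,t} \<in> S" "{t,w} \<in> S"
      show "w = q"
      proof (rule ccontr)
        assume wq: "w \<noteq> q"
        have tp: "t \<noteq> p" using False tw wq by (metis insert_commute)
        have tq: "t \<noteq> q" using ne tw by blast
        have wp: "w \<noteq> p"
        proof
          assume "w = p"
          hence "{p,t} \<in> S" using tw(2) by (simp add: insert_commute)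
          thus False using False tq by blast
        qed
        have "w \<noteq> t" "t \<noteq> q" using ne tw by blast+
        thus False using pfD[OF pf, of w t q p] tw pq tp wp wq pq'
          by (metis insert_commute)
      qed
    qed
    thus False using nt by blast
  qed
qed

lemma L1:
  assumes "finite X" "edges_in X S" "pf S"
  shows "card S \<le> card X"
  using assms
proof (induction "card X" arbitrary: X S rule: less_induct)
  case less
  have ne: "\<And>a b. {a,b} \<in> S \<Longrightarrow> a \<noteq> b" using edges_inD[OF less.prems(2)] by blast
  have inX: "\<And>a b. {a,b} \<in> S \<Longrightarrow> a \<in> X \<and> b \<in> X" using edges_inD[OF less.prems(2)] by blast
  show ?case
  proof (cases "S = {}")
    case True thus ?thesis by simp
  next
    case False
    then obtain e where e: "e \<in> S" by blast
    obtain p q where "e = {p,q}" using less.prems(2)[unfolded edges_in_def, rule_format, OF e] by blast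
    hence pq: "{p,q} \<in> S" using e by simp
    have "\<exists>Y. Y \<subseteq> X \<and> Y \<noteq> {} \<and> card (touch S Y) \<le> card Y"
    proof -
      consider (tri) r where "{p,r}\<in>S" "{q,r}\<in>S" | (cp) "center S p" | (cq) "center S q"
        using edge_tri[OF less.prems(3) less.prems(2) pq] by blast
      thus ?thesis
      proof cases
        case tri
        have d: "p \<noteq> q" "p \<noteq> r" "q \<noteq> r" using ne pq tri by blast+
        have sub: "touch S {p,q,r} \<subseteq> {{p,q},{p,r},{q,r}}"
        proof
          fix e assume e: "e \<in> touch S {p,q,r}"
          hence eS: "e \<in> S" unfolding touch_def by blast
          obtain a b where ab: "e = {a,b}" "e \<in> S" using less.prems(2)[unfolded edges_in_def, rule_format, OF eS] eS by blast
          have "a \<in> {p,q,r} \<or> b \<in> {p,q,r}" using e ab unfolding touch_def by auto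
          hence "\<exists>u v. e = {u,v} \<and> u \<in> {p,q,r}" using ab by (metis insert_commute)
          then obtain u v where uv: "e = {u,v}" "u \<in> {p,q,r}" by blast
          have uvne: "u \<noteq> v" using ne uv ab by blast
          show "e \<in> {{p,q},{p,r},{q,r}}"
          proof (rule ccontr)
            assume nin: "e \<notin> {{p,q},{p,r},{q,r}}"
            hence v: "v \<notin> {p,q,r}" using uv uvne by (auto simp: insert_commute)
            have uvS: "{u,v} \<in> S" "{v,u} \<in> S" using uv ab by (auto simp: insert_commute)
            have sy: "{q,p} \<in> S" "{r,p} \<in> S" "{r,q} \<in> S" using pq tri by (auto simp: insert_commute)
            from uv(2) consider "u = p" | "u = q" | "u = r" by blast
            thus False
            proof cases
              case 1 show False by (rule pfD[OF less.prems(3), of v p q r]) (use 1 v d pq tri uvS sy in auto)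
            next
              case 2 show False by (rule pfD[OF less.prems(3), of v q p r]) (use 2 v d pq tri uvS sy in auto)
            next
              case 3 show False by (rule pfD[OF less.prems(3), of v r p q]) (use 3 v d pq tri uvS sy in auto)
            qed
          qed
        qed
        have "card (touch S {p,q,r}) \<le> card {{p,q},{p,r},{q,r}}" by (rule card_mono[OF _ sub]) simp
        also have "\<dots> \<le> 3" by (simp add: card_insert_le_m1)
        also have "card {p,q,r} = 3" using d by simp
        ultimately have "card (touch S {p,q,r}) \<le> card {p,q,r}" by simp
        moreover have "{p,q,r} \<subseteq> X" using inX pq tri by blast
        ultimately show ?thesis by blast
      next
        case cp
        have fin: "finite (nbs S p)" using nbs_sub[OF less.prems(2)] less.prems(1) finite_subset by blast
        have "card (touch S (insert p (nbs S p))) \<le> card (nbs S p)"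
          unfolding star_touch[OF less.prems(2) cp] using card_image_le fin by blast
        also have "\<dots> \<le> card (insert p (nbs S p))" using fin by (simp add: card_insert_le)
        finally have "card (touch S (insert p (nbs S p))) \<le> card (insert p (nbs S p))" .
        moreover have "insert p (nbs S p) \<subseteq> X" using nbs_sub[OF less.prems(2)] inX pq by blast
        ultimately show ?thesis by blast
      next
        case cq
        have fin: "finite (nbs S q)" using nbs_sub[OF less.prems(2)] less.prems(1) finite_subset by blast
        have "card (touch S (insert q (nbs S q))) \<le> card (nbs S q)"
          unfolding star_touch[OF less.prems(2) cq] using card_image_le fin by blast
        also have "\<dots> \<le> card (insert q (nbs S q))" using fin by (simp add: card_insert_le)
        finally have "card (touch S (insert q (nbs S q))) \<le> card (insert q (nbs S q))" .
        moreover have "insert q (nbs S q) \<subseteq> X" using nbs_sub[OF less.prems(2)] inX pq by blast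
        ultimately show ?thesis by blast
      qed
    qed
    then obtain Y where Y: "Y \<subseteq> X" "Y \<noteq> {}" "card (touch S Y) \<le> card Y" by blast
    note rs = remove_split[OF less.prems(1) less.prems(2) less.prems(3) Y(1)]
    have fY: "finite Y" using Y(1) less.prems(1) finite_subset by blast
    have cXY: "card (X - Y) = card X - card Y" using card_Diff_subset[OF fY Y(1)] .
    have "card Y > 0" using fY Y(2) by (simp add: card_gt_0_iff)
    moreover have "card Y \<le> card X" using card_mono[OF less.prems(1) Y(1)] .
    ultimately have lt: "card (X - Y) < card X" using cXY by linarith
    have "card (S - touch S Y) \<le> card (X - Y)"
      using less.hyps[OF lt _ rs(2) rs(3)] less.prems(1) by blast
    thus ?thesis using rs(1) Y(3) cXY \<open>card Y \<le> card X\<close> by linarith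
  qed
qed



lemma esym: "{a,b} \<in> S \<Longrightarrow> {b,a} \<in> S" by (simp add: insert_commute)

lemma K:
  assumes fin: "finite X" and ei: "edges_in X S" and pf: "pf S"
    and c: "c1 \<in> X" "c2 \<in> X" "center S c1" "center S c2" "c1 \<noteq> c2" "{c1,c2} \<notin> S"
  shows "card S + 2 \<le> card X"
proof -
  define Y1 where "Y1 = insert c1 (nbs S c1)"
  define Y2 where "Y2 = insert c2 (nbs S c2)"
  have ne: "\<And>a b. {a,b} \<in> S \<Longrightarrow> a \<noteq> b" using edges_inD[OF ei] by blast
  have f1: "finite (nbs S c1)" "finite (nbs S c2)" using nbs_sub[OF ei] fin finite_subset by blast+
  have n1: "c1 \<notin> nbs S c1" "c2 \<notin> nbs S c2" using ne unfolding nbs_def by blast+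
  have cY1: "card Y1 = card (nbs S c1) + 1" using n1 f1 unfolding Y1_def by simp
  have cY2: "card Y2 = card (nbs S c2) + 1" using n1 f1 unfolding Y2_def by simp
  have disj: "Y1 \<inter> Y2 = {}"
  proof (rule ccontr)
    assume "Y1 \<inter> Y2 \<noteq> {}"
    then obtain x where x: "x \<in> Y1" "x \<in> Y2" by blast
    show False
    proof (cases "x = c1")
      case True
      thus False using x c(5) c(6) esym[of c2 c1 S] unfolding Y2_def nbs_def by auto
    next
      case False
      hence x1: "{c1,x} \<in> S" using x unfolding Y1_def nbs_def by auto
      show False
      proof (cases "x = c2")
        case True thus False using x1 c(6) by simp
      next
        case False
        hence "{c2,x} \<in> S" using x unfolding Y2_def nbs_def by auto
        hence "{x,c2} \<in> S" by (rule esym)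
        hence "c2 = c1" using c(3) x1 unfolding center_def by blast
        thus False using c(5) by simp
      qed
    qed
  qed
  have fY: "finite Y1" "finite Y2" using f1 unfolding Y1_def Y2_def by auto
  have cY: "card (Y1 \<union> Y2) = card (nbs S c1) + card (nbs S c2) + 2"
    using card_Un_disjoint[OF fY disj] cY1 cY2 by simp
  have YX: "Y1 \<union> Y2 \<subseteq> X" using nbs_sub[OF ei] c(1,2) unfolding Y1_def Y2_def by blast
  have tU: "touch S (Y1 \<union> Y2) = touch S Y1 \<union> touch S Y2" unfolding touch_def by blast
  have t1: "card (touch S Y1) \<le> card (nbs S c1)"
    unfolding Y1_def star_touch[OF ei c(3)] using card_image_le f1 by blast
  have t2: "card (touch S Y2) \<le> card (nbs S c2)"
    unfolding Y2_def star_touch[OF ei c(4)] using card_image_le f1 by blast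
  have "card (touch S (Y1 \<union> Y2)) \<le> card (touch S Y1) + card (touch S Y2)"
    unfolding tU by (rule card_Un_le)
  with t1 t2 have tt: "card (touch S (Y1 \<union> Y2)) \<le> card (nbs S c1) + card (nbs S c2)" by linarith
  note rs = remove_split[OF fin ei pf YX]
  have "card (S - touch S (Y1 \<union> Y2)) \<le> card (X - (Y1 \<union> Y2))"
    by (rule L1[OF _ rs(2) rs(3)]) (use fin in simp)
  moreover have "card (X - (Y1 \<union> Y2)) = card X - card (Y1 \<union> Y2)"
    using card_Diff_subset[OF _ YX] fY by simp
  moreover have "card (Y1 \<union> Y2) \<le> card X" using card_mono[OF fin YX] .
  ultimately show ?thesis using rs(1) tt cY by linarith
qed

lemma moveA:
  assumes pf: "pf S" and ei: "edges_in {0..<n} S" and xy: "{x,y} \<in> S"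
    and z: "z < n" "z \<noteq> x" "z \<noteq> y" "{y,z} \<notin> S"
    and pf': "pf (insert {y,z} (S - {{x,y}}))" and cs: "n \<le> card S + 1"
  shows "{x,z} \<in> S"
proof (rule ccontr)
  assume xz: "{x,z} \<notin> S"
  define S' where "S' = insert {y,z} (S - {{x,y}})"
  have pf'': "pf S'" using pf' unfolding S'_def .
  have ne: "\<And>a b. {a,b} \<in> S \<Longrightarrow> a \<noteq> b" using edges_inD[OF ei] by blast
  have inX: "\<And>a b. {a,b} \<in> S \<Longrightarrow> a < n \<and> b < n" using edges_inD[OF ei] by auto
  have xyne: "x \<noteq> y" using ne xy by blast
  have inS': "\<And>a b. {a,b} \<in> S \<Longrightarrow> a \<notin> {x,y} \<Longrightarrow> {a,b} \<in> S'" unfolding S'_def by auto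
  have inS'b: "\<And>a b. {a,b} \<in> S \<Longrightarrow> b \<notin> {x,y} \<Longrightarrow> {a,b} \<in> S'" unfolding S'_def by auto
  have yzS': "{y,z} \<in> S'" "{z,y} \<in> S'" unfolding S'_def by (auto simp: insert_commute)
  have yzS: "{z,y} \<notin> S" using z(4) by (simp add: insert_commute)
  have xzS: "{z,x} \<notin> S" using xz by (simp add: insert_commute)
  have yxS: "{y,x} \<in> S" using xy by (simp add: insert_commute)
  have zc: "center S z" unfolding center_def
  proof (intro allI impI)
    fix r w assume rw: "{z,r} \<in> S" "{r,w} \<in> S"
    show "w = z"
    proof (rule ccontr)
      assume wz: "w \<noteq> z"
      have rx: "r \<noteq> x" using rw xzS by blast
      have ry: "r \<noteq> y" using rw yzS by blast
      have rz: "r \<noteq> z" "r \<noteq> w" using ne rw by blast+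
      show False
      proof (cases "w = y")
        case True
        have "{y,r} \<in> S" using rw True by (simp add: insert_commute)
        show False by (rule pfD[OF pf, of x y r z])
          (use xy \<open>{y,r} \<in> S\<close> rw rx ry rz z xyne in \<open>auto simp: insert_commute\<close>)
      next
        case False
        have "{z,r} \<in> S'" using inS'[OF rw(1)] z by blast
        moreover have "{r,w} \<in> S'" using inS'[OF rw(2)] rx ry by blast
        ultimately show False by (rule_tac pfD[OF pf'', of y z r w])
          (use yzS' rx ry rz z False wz in auto)
      qed
    qed
  qed
  have cz: "z \<in> {0..<n}" using z by simp
  show False
  proof (cases "\<exists>t. {y,t} \<in> S \<and> t \<noteq> x")
    case True
    then obtain t where t: "{y,t} \<in> S" "t \<noteq> x" by blast
    have tz: "t \<noteq> z" using t z(4) by blast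
    have ty: "t \<noteq> y" using ne t by blast
    have tri: False if tp: "{x,p} \<in> S" "{y,p} \<in> S" "p \<noteq> x" for p
    proof -
      have pz: "p \<noteq> z" using tp z(4) by blast
      have py: "p \<noteq> y" using ne tp by blast
      have "{x,p} \<in> S'" using inS'b[OF tp(1)] tp(3) py by blast
      moreover have "{p,y} \<in> S'" using inS'[OF esym[OF tp(2)]] tp(3) py by blast
      ultimately show False by (rule_tac pfD[OF pf'', of x p y z])
        (use yzS' tp py pz z xyne in auto)
    qed
    have yc: "center S y" unfolding center_def
    proof (intro allI impI)
      fix p w assume pw: "{y,p} \<in> S" "{p,w} \<in> S"
      show "w = y"
      proof (rule ccontr)
        assume wy: "w \<noteq> y"
        have pne: "p \<noteq> y" "p \<noteq> w" using ne pw by blast+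
        show False
        proof (cases "p = x")
          case True
          show False
          proof (cases "w = t")
            case True
            thus False using tri[of t] pw \<open>p = x\<close> t by auto
          next
            case False
            show False by (rule pfD[OF pf, of w x y t])
              (use pw \<open>p = x\<close> t False wy pne xyne ty in \<open>auto simp: insert_commute\<close>)
          qed
        next
          case False
          show False
          proof (cases "w = x")
            case True
            thus False using tri[of p] pw False by (auto simp: insert_commute)
          next
            case wx: False
            show False by (rule pfD[OF pf, of w p y x])
              (use pw False wx wy pne xyne yxS in \<open>auto simp: insert_commute\<close>)
          qed
        qed
      qed
    qed
    have "card S + 2 \<le> card {0..<n}"
      by (rule K[OF _ ei pf _ cz yc zc]) (use inX xy z xz in auto)
    thus False using cs by simp
  next
    case False
    have xc: "center S x" unfolding center_def
    proof (intro allI impI)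
      fix q w assume qw: "{x,q} \<in> S" "{q,w} \<in> S"
      show "w = x"
      proof (rule ccontr)
        assume wx: "w \<noteq> x"
        have qne: "q \<noteq> x" "q \<noteq> w" using ne qw by blast+
        show False
        proof (cases "q = y")
          case True thus False using False qw wx by auto
        next
          case qy: False
          have wy: "w \<noteq> y" using False qw qne qy by (auto simp: insert_commute)
          show False by (rule pfD[OF pf, of w q x y])
            (use qw qne qy wy wx xy xyne in \<open>auto simp: insert_commute\<close>)
        qed
      qed
    qed
    have "card S + 2 \<le> card {0..<n}"
      by (rule K[OF _ ei pf _ cz xc zc]) (use inX xy z xz in auto)
    thus False using cs by simp
  qed
qed



lemma two_set: assumes "e = {a,b}" "a \<noteq> b" "u \<in> e" shows "\<exists>v. v \<noteq> u \<and> e = {u,v}"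
  using assms by (auto simp: insert_commute)

lemma two_set2: assumes "e = {a,b}" "u \<in> e" "w \<in> e" "u \<noteq> w" shows "e = {u,w}"
  using assms by auto

lemma pf_from3:
  assumes ei: "edges_in X S" and pf: "pf S" and efg: "e \<in> S" "f \<in> S" "g \<in> S"
    and d: "e \<noteq> f" "f \<noteq> g" "e \<inter> f \<noteq> {}" "f \<inter> g \<noteq> {}" "e \<inter> g = {}"
  shows False
proof -
  obtain u where u: "u \<in> e" "u \<in> f" using d(3) by blast
  obtain w where w: "w \<in> f" "w \<in> g" using d(4) by blast
  have uw: "u \<noteq> w" using u w d(5) by blast
  obtain a1 b1 where e1: "a1 \<noteq> b1" "e = {a1,b1}" using ei[unfolded edges_in_def, rule_format, OF efg(1)] by blast
  obtain a2 b2 where e2: "a2 \<noteq> b2" "f = {a2,b2}" using ei[unfolded edges_in_def, rule_format, OF efg(2)] by blast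
  obtain a3 b3 where e3: "a3 \<noteq> b3" "g = {a3,b3}" using ei[unfolded edges_in_def, rule_format, OF efg(3)] by blast
  obtain a where a: "a \<noteq> u" "e = {u,a}" using two_set[OF e1(2) e1(1) u(1)] by blast
  obtain d' where dd: "d' \<noteq> w" "g = {w,d'}" using two_set[OF e3(2) e3(1) w(2)] by blast
  have f: "f = {u,w}" using two_set2[OF e2(2) u(2) w(1) uw] .
  have "a \<noteq> w" "a \<noteq> d'" "u \<noteq> d'" using a dd d(5) by auto
  show False by (rule pfD[OF pf, of a u w d'])
    (use efg a dd f uw \<open>a \<noteq> w\<close> \<open>a \<noteq> d'\<close> \<open>u \<noteq> d'\<close> in \<open>auto simp: insert_commute\<close>)
qed

lemma Kn_mem: "e \<in> Kn_edges n \<longleftrightarrow> (\<exists>a b. a < n \<and> b < n \<and> a \<noteq> b \<and> e = {a,b})"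
  unfolding Kn_edges_def by blast

lemma edges_in_Kn: "edges_in {0..<n} S \<longleftrightarrow> S \<subseteq> Kn_edges n"
proof
  assume h: "edges_in {0..<n} S"
  show "S \<subseteq> Kn_edges n"
  proof
    fix e assume "e \<in> S"
    then obtain a b where "a \<noteq> b" "a \<in> {0..<n}" "b \<in> {0..<n}" "e = {a,b}"
      using h[unfolded edges_in_def, rule_format] by blast
    thus "e \<in> Kn_edges n" unfolding Kn_mem by auto
  qed
next
  assume h: "S \<subseteq> Kn_edges n"
  show "edges_in {0..<n} S" unfolding edges_in_def
  proof
    fix e assume "e \<in> S"
    then obtain a b where "a < n" "b < n" "a \<noteq> b" "e = {a,b}" using h Kn_mem by blast
    thus "\<exists>a b. a \<noteq> b \<and> a \<in> {0..<n} \<and> b \<in> {0..<n} \<and> e = {a, b}" by auto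
  qed
qed

lemma walk_ne: "walk V E xs \<Longrightarrow> xs \<noteq> []" by (cases xs) auto

lemma walk_set: "walk V E xs \<Longrightarrow> set xs \<subseteq> V"
  by (induction V E xs rule: walk.induct) auto

lemma gdist_le: assumes "walk V E xs" "hd xs = u" "last xs = v"
  shows "gdist V E u v \<le> length xs - 1"
proof -
  have "length xs = Suc (length xs - 1)" using walk_ne[OF assms(1)] by (cases xs) auto
  thus ?thesis unfolding gdist_def using assms by (intro Least_le) blast
qed

lemma gdist_att: assumes "walk V E xs" "hd xs = u" "last xs = v"
  shows "\<exists>ys. walk V E ys \<and> hd ys = u \<and> last ys = v \<and> length ys = Suc (gdist V E u v)"
proof -
  have "length xs = Suc (length xs - 1)" using walk_ne[OF assms(1)] by (cases xs) auto
  hence "\<exists>k xs. walk V E xs \<and> hd xs = u \<and> last xs = v \<and> length xs = Suc k" using assms by blast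
  thus ?thesis unfolding gdist_def by (rule LeastI_ex)
qed

lemma gdist_0: "u \<in> V \<Longrightarrow> gdist V E u u = 0"
  using gdist_le[of V E "[u]" u u] by simp

lemma gdist_1: "u \<in> V \<Longrightarrow> v \<in> V \<Longrightarrow> E u v \<Longrightarrow> gdist V E u v \<le> 1"
  using gdist_le[of V E "[u,v]" u v] by simp

lemma gdist_2:
  assumes "e \<in> Kn_edges n" "g \<in> Kn_edges n" "e \<inter> g = {}"
  shows "gdist (Kn_edges n) line_adj e g = 2"
proof -
  obtain a b where ab: "a < n" "b < n" "a \<noteq> b" "e = {a,b}" using assms(1) Kn_mem by blast
  obtain c d where cd: "c < n" "d < n" "c \<noteq> d" "g = {c,d}" using assms(2) Kn_mem by blast
  have bc: "b \<noteq> c" using ab cd assms(3) by auto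
  have m: "{b,c} \<in> Kn_edges n" using ab cd bc Kn_mem by blast
  have "line_adj e {b,c}" "line_adj {b,c} g" unfolding line_adj_def using ab cd assms(3) by auto
  hence w: "walk (Kn_edges n) line_adj [e, {b,c}, g]" using assms m by simp
  have le: "gdist (Kn_edges n) line_adj e g \<le> 2" using gdist_le[OF w, of e g] by simp
  obtain ys where ys: "walk (Kn_edges n) line_adj ys" "hd ys = e" "last ys = g"
    "length ys = Suc (gdist (Kn_edges n) line_adj e g)" using gdist_att[OF w] by auto
  have "gdist (Kn_edges n) line_adj e g \<noteq> 0"
  proof
    assume "gdist (Kn_edges n) line_adj e g = 0"
    then obtain y where "ys = [y]" using ys(4) by (cases ys) auto
    hence "e = g" using ys by simp
    thus False using assms(3) ab by auto
  qed
  moreover have "gdist (Kn_edges n) line_adj e g \<noteq> 1"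
  proof
    assume "gdist (Kn_edges n) line_adj e g = 1"
    then obtain y1 y2 where "ys = [y1,y2]" using ys(4)
      by (cases ys; cases "tl ys") auto
    hence "line_adj e g" using ys by simp
    thus False using assms(3) unfolding line_adj_def by simp
  qed
  ultimately show ?thesis using le by linarith
qed

lemma gdist_le2:
  assumes "e \<in> Kn_edges n" "g \<in> Kn_edges n"
  shows "gdist (Kn_edges n) line_adj e g \<le> 2"
proof (cases "e = g")
  case True thus ?thesis using gdist_0[OF assms(1)] by simp
next
  case False
  show ?thesis
  proof (cases "line_adj e g")
    case True thus ?thesis using gdist_1[of e "Kn_edges n" g line_adj, OF assms True] by simp
  next
    case nl: False
    hence "e \<inter> g = {}" using False unfolding line_adj_def by blast
    thus ?thesis using gdist_2[OF assms] by simp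
  qed
qed

lemma gp_char:
  "gp_set (Kn_edges n) line_adj S \<longleftrightarrow> S \<subseteq> Kn_edges n \<and> pf S"
proof
  assume gp: "gp_set (Kn_edges n) line_adj S"
  hence sub: "S \<subseteq> Kn_edges n" unfolding gp_set_def by blast
  have "pf S" unfolding pf_def
  proof (intro allI impI)
    fix a b c d assume h: "{a,b}\<in>S" "{b,c}\<in>S" "{c,d}\<in>S" "a\<noteq>b" "b\<noteq>c" "c\<noteq>d" "a\<noteq>c" "a\<noteq>d" "b\<noteq>d"
    let ?e = "{a,b}" and ?f = "{b,c}" and ?g = "{c,d}"
    have V: "?e \<in> Kn_edges n" "?f \<in> Kn_edges n" "?g \<in> Kn_edges n" using h sub by blast+
    have dis: "?e \<inter> ?g = {}" using h by auto
    have adj: "line_adj ?e ?f" "line_adj ?f ?g" unfolding line_adj_def using h by (auto simp: doubleton_eq_iff)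
    have w: "walk (Kn_edges n) line_adj [?e,?f,?g]" using V adj by simp
    have dist: "distinct [?e,?f,?g]" using h by (auto simp: doubleton_eq_iff)
    have sp: "shortest_path (Kn_edges n) line_adj [?e,?f,?g]"
      unfolding shortest_path_def using w dist gdist_2[OF V(1) V(3) dis] by simp
    have ne: "?e \<noteq> ?f" "?f \<noteq> ?g" "?e \<noteq> ?g" using dist by auto
    show False using gp h(1-3) ne sp unfolding gp_set_def
      by (metis list.set_intros(1) list.set_intros(2))
  qed
  thus "S \<subseteq> Kn_edges n \<and> pf S" using sub by blast
next
  assume a: "S \<subseteq> Kn_edges n \<and> pf S"
  hence sub: "S \<subseteq> Kn_edges n" and pf: "pf S" by auto
  have ei: "edges_in {0..<n} S" using sub edges_in_Kn by blast
  show "gp_set (Kn_edges n) line_adj S" unfolding gp_set_def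
  proof (intro conjI sub ballI impI notI)
    fix x y z assume xyz: "x \<in> S" "y \<in> S" "z \<in> S" "x \<noteq> y \<and> y \<noteq> z \<and> x \<noteq> z"
    assume "\<exists>P. shortest_path (Kn_edges n) line_adj P \<and> x \<in> set P \<and> y \<in> set P \<and> z \<in> set P"
    then obtain P where P: "shortest_path (Kn_edges n) line_adj P" "x \<in> set P" "y \<in> set P" "z \<in> set P" by blast
    have w: "walk (Kn_edges n) line_adj P" and dP: "distinct P"
      and lP: "length P = Suc (gdist (Kn_edges n) line_adj (hd P) (last P))"
      using P(1) unfolding shortest_path_def by auto
    have Pne: "P \<noteq> []" using walk_ne[OF w] .
    have hl: "hd P \<in> Kn_edges n" "last P \<in> Kn_edges n" using walk_set[OF w] Pne by auto
    have "card {x,y,z} \<le> card (set P)" using P(2-4) by (intro card_mono) auto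
    hence "3 \<le> length P" using xyz(4) distinct_card[OF dP] by simp
    moreover have "length P \<le> 3" using lP gdist_le2[OF hl] by simp
    ultimately have l3: "length P = 3" by simp
    hence g2: "gdist (Kn_edges n) line_adj (hd P) (last P) = 2" using lP by simp
    have hne: "hd P \<noteq> last P" using g2 gdist_0[OF hl(1)] by auto
    have nadj: "\<not> line_adj (hd P) (last P)" using g2 gdist_1[of "hd P" "Kn_edges n" "last P" line_adj, OF hl] by auto
    have dj: "hd P \<inter> last P = {}" using hne nadj unfolding line_adj_def by blast
    obtain a b c where abc: "P = [a,b,c]" using l3
      by (cases P; cases "tl P"; cases "tl (tl P)") auto
    have eq: "{a,b,c} = {x,y,z}"
    proof -
      have "{x,y,z} \<subseteq> {a,b,c}" using P(2-4) abc by auto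
      moreover have "card {a,b,c} = 3" using dP abc by simp
      moreover have "card {x,y,z} = 3" using xyz(4) by simp
      ultimately have "{x,y,z} = {a,b,c}" using card_subset_eq[of "{a,b,c}" "{x,y,z}"] by simp
      thus ?thesis by simp
    qed
    have "{a,b,c} \<subseteq> S" unfolding eq using xyz(1-3) by simp
    hence inS: "a \<in> S" "b \<in> S" "c \<in> S" by simp_all
    have "line_adj a b" "line_adj b c" using w abc by auto
    thus False using pf_from3[OF ei pf inS] dj abc unfolding line_adj_def by auto
  qed
qed



lemma Kn_finite: "finite (Kn_edges n)"
proof -
  have "Kn_edges n \<subseteq> Pow {0..<n}" unfolding Kn_edges_def by auto
  thus ?thesis by (rule finite_subset) simp
qed

lemma lm_unpack:
  assumes lm: "legal_move (Kn_edges n) line_adj S S'" and sub: "S \<subseteq> Kn_edges n"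
  shows "\<exists>x y z. {x,y} \<in> S \<and> z < n \<and> z \<noteq> x \<and> z \<noteq> y \<and> x \<noteq> y \<and> {y,z} \<notin> S \<and>
     S' = insert {y,z} (S - {{x,y}}) \<and> gp_set (Kn_edges n) line_adj S'"
proof -
  obtain u v where uv: "u \<in> S" "v \<in> Kn_edges n" "v \<notin> S" "line_adj u v"
    "S' = insert v (S - {u})" "gp_set (Kn_edges n) line_adj S'"
    using lm unfolding legal_move_def by blast
  obtain a b where ab: "a < n" "b < n" "a \<noteq> b" "u = {a,b}" using uv(1) sub Kn_mem by blast
  obtain c d where cd: "c < n" "d < n" "c \<noteq> d" "v = {c,d}" using uv(2) Kn_mem by blast
  obtain y where y: "y \<in> u" "y \<in> v" using uv(4) unfolding line_adj_def by blast
  obtain x where x: "x \<noteq> y" "u = {y,x}" using two_set[OF ab(4) ab(3) y(1)] by blast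
  obtain z where z: "z \<noteq> y" "v = {y,z}" using two_set[OF cd(4) cd(3) y(2)] by blast
  have zx: "z \<noteq> x" using uv(4) x z unfolding line_adj_def by auto
  have zn: "z < n" using z cd by auto
  have u': "u = {x,y}" using x by (simp add: insert_commute)
  show ?thesis using uv u' z zx zn x by auto
qed

lemma leave:
  assumes "(p,q) \<in> R\<^sup>*" "p \<in> A" "q \<notin> A"
  shows "\<exists>a b. (a,b) \<in> R \<and> a \<in> A \<and> b \<notin> A"
  using assms
proof (induction rule: rtrancl_induct)
  case base thus ?case by simp
next
  case (step y z)
  thus ?case by (cases "y \<in> A") auto
qed

lemma KnI: "a < n \<Longrightarrow> b < n \<Longrightarrow> a \<noteq> b \<Longrightarrow> {a,b} \<in> Kn_edges n"
  unfolding Kn_mem by blast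

lemma not_pf_Kn: assumes "n \<ge> 4" shows "\<not> pf (Kn_edges n)"
proof
  assume "pf (Kn_edges n)"
  moreover have "{0,1} \<in> Kn_edges n" "{1,2} \<in> Kn_edges n" "{2,3} \<in> Kn_edges n"
    using assms by (auto intro!: KnI)
  ultimately show False using pfD[of "Kn_edges n" 0 1 2 3] by simp
qed

definition Rel :: "nat set set \<Rightarrow> (nat \<times> nat) set" where
  "Rel S = {(p,q). {p,q} \<in> S}"

lemma upper:
  assumes n4: "n \<ge> 4" and mob: "mobile_gp_set (Kn_edges n) line_adj S"
  shows "card S \<le> n - 2"
proof (rule ccontr)
  assume "\<not> card S \<le> n - 2"
  hence cs: "n \<le> card S + 1" by simp
  let ?V = "Kn_edges n"
  have gpS: "gp_set ?V line_adj S" using mob unfolding mobile_gp_set_def by blast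
  obtain ts where ts: "ts \<noteq> []" "hd ts = S"
    "\<And>i. Suc i < length ts \<Longrightarrow> legal_move ?V line_adj (ts ! i) (ts ! Suc i)"
    "?V \<subseteq> \<Union> (set ts)"
    using mob unfolding mobile_gp_set_def by blast
  have ts0: "ts ! 0 = S" using ts(1,2) by (simp add: hd_conv_nth)
  define C where "C = (Rel S)\<^sup>*"
  have inv: "gp_set ?V line_adj (ts ! i) \<and> card (ts ! i) = card S \<and> (\<forall>p q. {p,q} \<in> ts ! i \<longrightarrow> (p,q) \<in> C)"
    if "i < length ts" for i
    using that
  proof (induction i)
    case 0
    show ?case using gpS ts0 unfolding C_def Rel_def by auto
  next
    case (Suc i)
    hence IH: "gp_set ?V line_adj (ts ! i)" "card (ts ! i) = card S"
      "\<And>p q. {p,q} \<in> ts ! i \<Longrightarrow> (p,q) \<in> C" by auto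
    have sub: "ts ! i \<subseteq> ?V" and pfi: "pf (ts ! i)" using IH(1) gp_char by blast+
    obtain x y z where m: "{x,y} \<in> ts ! i" "z < n" "z \<noteq> x" "z \<noteq> y" "x \<noteq> y" "{y,z} \<notin> ts ! i"
      "ts ! Suc i = insert {y,z} (ts ! i - {{x,y}})" "gp_set ?V line_adj (ts ! Suc i)"
      using lm_unpack[OF ts(3)[OF Suc.prems] sub] by blast
    have pf': "pf (insert {y,z} (ts ! i - {{x,y}}))" using m(7,8) gp_char by metis
    have xz: "{x,z} \<in> ts ! i"
      by (rule moveA[OF pfi _ m(1) m(2) m(3) m(4) m(6) pf']) (use sub edges_in_Kn IH(2) cs in auto)
    have fin: "finite (ts ! i)" using sub Kn_finite finite_subset by blast
    have "card (ts ! i) > 0" using fin m(1) card_gt_0_iff by blast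
    hence "card (ts ! Suc i) = card (ts ! i)"
      using m(1,6,7) fin by (simp add: card_Diff_singleton)
    moreover have "(p,q) \<in> C" if pq: "{p,q} \<in> ts ! Suc i" for p q
    proof (cases "{p,q} = {y,z}")
      case True
      have yx: "(y,x) \<in> C" "(x,y) \<in> C" using IH(3) m(1) by (auto simp: insert_commute)
      have zx: "(x,z) \<in> C" "(z,x) \<in> C" using IH(3) xz by (auto simp: insert_commute)
      have "(y,z) \<in> C" "(z,y) \<in> C" using yx zx unfolding C_def by (meson rtrancl_trans)+
      thus ?thesis using True by (auto simp: doubleton_eq_iff)
    next
      case False
      thus ?thesis using pq m(7) IH(3) by auto
    qed
    ultimately show ?case using m(8) IH(2) by auto
  qed
  show False
  proof (cases "\<exists>p q. p < n \<and> q < n \<and> p \<noteq> q \<and> (p,q) \<notin> C")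
    case True
    then obtain p q where pq: "p < n" "q < n" "p \<noteq> q" "(p,q) \<notin> C" by blast
    have "{p,q} \<in> ?V" using pq Kn_mem by blast
    then obtain T where "T \<in> set ts" "{p,q} \<in> T" using ts(4) by blast
    then obtain i where "i < length ts" "{p,q} \<in> ts ! i" by (metis in_set_conv_nth)
    thus False using inv pq(4) by blast
  next
    case False
    hence conn: "\<And>p q. p < n \<Longrightarrow> q < n \<Longrightarrow> p \<noteq> q \<Longrightarrow> (p,q) \<in> C" by blast
    have sub: "S \<subseteq> ?V" and pfS: "pf S" using gpS gp_char by blast+
    have "S \<noteq> ?V" using pfS not_pf_Kn[OF n4] by metis
    then obtain e where e: "e \<in> ?V" "e \<notin> S" using sub by blast
    then obtain T where "T \<in> set ts" "e \<in> T" using ts(4) by blast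
    then obtain i where i: "i < length ts" "e \<in> ts ! i" by (metis in_set_conv_nth)
    have "i \<noteq> 0"
    proof
      assume "i = 0"
      hence "e \<in> S" using i(2) ts0 by simp
      thus False using e(2) by simp
    qed
    hence l1: "Suc 0 < length ts" using i by simp
    obtain x y z where m: "{x,y} \<in> S" "z < n" "z \<noteq> x" "z \<noteq> y" "x \<noteq> y" "{y,z} \<notin> S"
      "ts ! 1 = insert {y,z} (S - {{x,y}})" "gp_set ?V line_adj (ts ! 1)"
      using lm_unpack[OF ts(3)[OF l1] ] sub ts0 by auto
    define S' where "S' = insert {y,z} (S - {{x,y}})"
    have pf': "pf S'" using m(7,8) gp_char unfolding S'_def by metis
    have xz: "{x,z} \<in> S"
      by (rule moveA[OF pfS _ m(1) m(2) m(3) m(4) m(6)]) (use sub edges_in_Kn cs pf' S'_def in auto)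
    have xn: "x < n" "y < n" using sub m(1) edges_inD[of "{0..<n}" S x y] edges_in_Kn by auto
    have "card {x,y,z} \<le> 3" by (simp add: card_insert_le_m1)
    have "\<not> {0..<n} \<subseteq> {x,y,z}"
    proof
      assume "{0..<n} \<subseteq> {x,y,z}"
      hence "card {0..<n} \<le> card {x,y,z}" by (intro card_mono) auto
      thus False using \<open>card {x,y,z} \<le> 3\<close> n4 by simp
    qed
    then obtain w where w: "w < n" "w \<notin> {x,y,z}" by (meson atLeastLessThan_iff subsetI zero_le)
    have "(x,w) \<in> (Rel S)\<^sup>*" using conn[of x w] w xn unfolding C_def by auto
    then obtain a b where ab: "(a,b) \<in> Rel S" "a \<in> {x,y,z}" "b \<notin> {x,y,z}"
      using leave[of x w "Rel S" "{x,y,z}"] w by auto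
    have abS: "{a,b} \<in> S" using ab unfolding Rel_def by simp
    have yxS: "{y,x} \<in> S" "{z,x} \<in> S" using m(1) xz by (auto simp: insert_commute)
    from ab(2) consider "a = x" | "a = y" | "a = z" by blast
    thus False
    proof cases
      case 1
      have "{y,z} \<in> S'" "{z,x} \<in> S'" "{x,b} \<in> S'" unfolding S'_def
        using 1 abS yxS ab(3) m(4) by (auto simp: doubleton_eq_iff)
      thus False using pfD[OF pf', of y z x b] ab(3) m by auto
    next
      case 2
      show False by (rule pfD[OF pfS, of b y x z]) (use 2 abS yxS xz m ab(3) in \<open>auto simp: insert_commute\<close>)
    next
      case 3
      show False by (rule pfD[OF pfS, of b z x y]) (use 3 abS yxS xz m ab(3) in \<open>auto simp: insert_commute\<close>)
    qed
  qed
qed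



definition st :: "nat \<Rightarrow> nat \<Rightarrow> nat set set" where
  "st n w = (\<lambda>v. {0,v}) ` ({1..<n} - {w})"

definition ex :: "nat \<Rightarrow> nat \<Rightarrow> nat \<Rightarrow> nat set set" where
  "ex n w l = insert {l,w} (st n w - {{0,l}})"

lemma st_mem: "e \<in> st n w \<longleftrightarrow> (\<exists>v. 0 < v \<and> v < n \<and> v \<noteq> w \<and> e = {0,v})"
  unfolding st_def by auto

lemma st_sub: "st n w \<subseteq> Kn_edges n"
  unfolding st_def using KnI by fastforce

lemma pf_zero: assumes "\<And>e. e \<in> S \<Longrightarrow> 0 \<in> e" shows "pf S"
  unfolding pf_def
proof (intro allI impI)
  fix a b c d :: nat assume h: "{a,b}\<in>S" "{b,c}\<in>S" "{c,d}\<in>S" "a\<noteq>b" "b\<noteq>c" "c\<noteq>d" "a\<noteq>c" "a\<noteq>d" "b\<noteq>d"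
  have "0 \<in> {a,b}" "0 \<in> {c,d}" using assms h by blast+
  thus False using h by auto
qed

lemma pf_st: "pf (st n w)"
  by (rule pf_zero) (auto simp: st_mem)

lemma pf_gen:
  assumes A: "\<And>e. e \<in> S \<Longrightarrow> e \<noteq> {l,w} \<Longrightarrow> 0 \<in> e \<and> l \<notin> e \<and> w \<notin> e"
  shows "pf S"
  unfolding pf_def
proof (intro allI impI)
  fix a b c d :: nat assume h: "{a,b}\<in>S" "{b,c}\<in>S" "{c,d}\<in>S" "a\<noteq>b" "b\<noteq>c" "c\<noteq>d" "a\<noteq>c" "a\<noteq>d" "b\<noteq>d"
  have d12: "{a,b} \<noteq> {b,c}" "{b,c} \<noteq> {c,d}" using h by (auto simp: doubleton_eq_iff)
  show False
  proof (cases "{a,b} = {l,w}")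
    case True
    hence "b \<in> {l,w}" by auto
    thus False using A[OF h(2)] True d12 by auto
  next
    case F1: False
    show False
    proof (cases "{b,c} = {l,w}")
      case True
      hence "b \<in> {l,w}" by auto
      thus False using A[OF h(1) F1] by auto
    next
      case F2: False
      show False
      proof (cases "{c,d} = {l,w}")
        case True
        hence "c \<in> {l,w}" by auto
        thus False using A[OF h(2) F2] by auto
      next
        case F3: False
        have "0 \<in> {a,b}" "0 \<in> {c,d}" using A[OF h(1) F1] A[OF h(3) F3] by blast+
        thus False using h by auto
      qed
    qed
  qed
qed

lemma pf_ex: assumes "l \<noteq> 0" "w \<noteq> 0" shows "pf (ex n w l)"
  by (rule pf_gen[of _ l w]) (use assms in \<open>auto simp: ex_def st_mem\<close>)

lemma ex_sub: assumes "l < n" "w < n" "l \<noteq> w" shows "ex n w l \<subseteq> Kn_edges n"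
  unfolding ex_def using st_sub KnI assms by blast

lemma card_st: assumes "1 \<le> w" "w < n" shows "card (st n w) = n - 2"
proof -
  have "inj_on (\<lambda>v. {0::nat,v}) ({1..<n} - {w})" unfolding inj_on_def by (auto simp: doubleton_eq_iff)
  hence "card (st n w) = card ({1..<n} - {w})" unfolding st_def by (rule card_image)
  also have "\<dots> = n - 2" using assms by simp
  finally show ?thesis .
qed

lemma gp_st: "gp_set (Kn_edges n) line_adj (st n w)"
  using gp_char st_sub pf_st by blast

lemma gp_ex: "l < n \<Longrightarrow> w < n \<Longrightarrow> l \<noteq> w \<Longrightarrow> l \<noteq> 0 \<Longrightarrow> w \<noteq> 0 \<Longrightarrow> gp_set (Kn_edges n) line_adj (ex n w l)"
  using gp_char ex_sub pf_ex by blast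

lemma lm_st:
  assumes "1 \<le> a" "a < n" "1 \<le> b" "b < n" "a \<noteq> b"
  shows "legal_move (Kn_edges n) line_adj (st n a) (st n b)"
  unfolding legal_move_def
proof (intro exI conjI)
  show "{0,b} \<in> st n a" unfolding st_mem using assms by (intro exI[of _ b]) auto
  show "{0,a} \<in> Kn_edges n" using assms by (auto intro: KnI)
  show "{0,a} \<notin> st n a" by (auto simp: st_mem doubleton_eq_iff)
  show "line_adj {0,b} {0,a}" using assms unfolding line_adj_def by (auto simp: doubleton_eq_iff)
  show "st n b = insert {0,a} (st n a - {{0,b}})"
    using assms by (auto simp: st_mem doubleton_eq_iff)
  show "gp_set (Kn_edges n) line_adj (st n b)" by (rule gp_st)
qed

lemma lm_ex1:
  assumes "1 \<le> w" "w < n" "1 \<le> l" "l < n" "l \<noteq> w"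
  shows "legal_move (Kn_edges n) line_adj (st n w) (ex n w l)"
  unfolding legal_move_def
proof (intro exI conjI)
  show "{0,l} \<in> st n w" unfolding st_mem using assms by (intro exI[of _ l]) auto
  show "{l,w} \<in> Kn_edges n" using assms by (auto intro: KnI)
  show "{l,w} \<notin> st n w" using assms by (auto simp: st_mem doubleton_eq_iff)
  show "line_adj {0,l} {l,w}" using assms unfolding line_adj_def by (auto simp: doubleton_eq_iff)
  show "ex n w l = insert {l,w} (st n w - {{0,l}})" unfolding ex_def ..
  show "gp_set (Kn_edges n) line_adj (ex n w l)"
    using gp_ex[of l n w] assms by simp
qed

lemma lm_ex2:
  assumes "1 \<le> w" "w < n" "1 \<le> l" "l < n" "l \<noteq> w"
  shows "legal_move (Kn_edges n) line_adj (ex n w l) (st n w)"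
  unfolding legal_move_def
proof (intro exI conjI)
  show "{l,w} \<in> ex n w l" unfolding ex_def by simp
  show "{0,l} \<in> Kn_edges n" using assms by (auto intro: KnI)
  show "{0,l} \<notin> ex n w l" using assms by (auto simp: ex_def st_mem doubleton_eq_iff)
  show "line_adj {l,w} {0,l}" using assms unfolding line_adj_def by (auto simp: doubleton_eq_iff)
  show "st n w = insert {0,l} (ex n w l - {{l,w}})"
    using assms by (auto simp: ex_def st_mem doubleton_eq_iff)
  show "gp_set (Kn_edges n) line_adj (st n w)" by (rule gp_st)
qed



lemma succ_nth: "successively P xs \<Longrightarrow> Suc i < length xs \<Longrightarrow> P (xs ! i) (xs ! Suc i)"
proof (induction P xs arbitrary: i rule: successively.induct)
  case (3 P x y xs)
  thus ?case by (cases i) auto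
qed auto

lemma combine:
  assumes fin: "finite F"
    and each: "\<And>v. v \<in> F \<Longrightarrow> \<exists>ts. ts \<noteq> [] \<and> hd ts = S \<and> last ts = S \<and> successively P ts \<and> v \<in> \<Union>(set ts)"
  shows "\<exists>ts. ts \<noteq> [] \<and> hd ts = S \<and> last ts = S \<and> successively P ts \<and> F \<subseteq> \<Union>(set ts)"
  using fin each
proof (induction F rule: finite_induct)
  case empty
  show ?case by (intro exI[of _ "[S]"]) simp
next
  case (insert v F)
  obtain ts where ts: "ts \<noteq> []" "hd ts = S" "last ts = S" "successively P ts" "F \<subseteq> \<Union>(set ts)"
    using insert by blast
  obtain us where us: "us \<noteq> []" "hd us = S" "last us = S" "successively P us" "v \<in> \<Union>(set us)"
    using insert.prems by blast
  obtain u0 rest where ur: "us = u0 # rest" using us(1) by (cases us) auto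
  have u0: "u0 = S" using ur us(2) by simp
  have sr: "successively P rest" using us(4) ur by (cases rest) (auto simp: successively_Cons)
  have link: "rest = [] \<or> P S (hd rest)" using us(4) ur u0 by (auto simp: successively_Cons)
  let ?ws = "ts @ rest"
  have "successively P ?ws" using ts(1,3,4) sr link by (auto simp: successively_append_iff)
  moreover have "hd ?ws = S" using ts by simp
  moreover have "last ?ws = S" using ts(3) us(3) ur by (cases "rest = []") auto
  moreover have "insert v F \<subseteq> \<Union>(set ?ws)"
  proof -
    have "S \<in> set ts" using ts(1,3) by auto
    hence "\<Union>(set us) \<subseteq> \<Union>(set ?ws)" using ur u0 by auto
    thus ?thesis using ts(5) us(5) by auto
  qed
  ultimately show ?case using ts(1) by blast
qed

lemma mobile_intro:
  assumes fin: "finite V" and gp: "gp_set V E S"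
    and each: "\<And>v. v \<in> V \<Longrightarrow> \<exists>ts. ts \<noteq> [] \<and> hd ts = S \<and> last ts = S \<and> successively (legal_move V E) ts \<and> v \<in> \<Union>(set ts)"
  shows "mobile_gp_set V E S"
proof -
  obtain ts where ts: "ts \<noteq> []" "hd ts = S" "successively (legal_move V E) ts" "V \<subseteq> \<Union>(set ts)"
    using combine[OF fin each] by blast
  show ?thesis unfolding mobile_gp_set_def using gp ts succ_nth[OF ts(3)] by blast
qed

lemma lower:
  assumes n4: "n \<ge> 4"
  shows "mobile_gp_set (Kn_edges n) line_adj (st n 1)"
proof (rule mobile_intro[OF Kn_finite gp_st])
  let ?R = "legal_move (Kn_edges n) line_adj"
  fix e assume e: "e \<in> Kn_edges n"
  then obtain a b where ab: "a < n" "b < n" "a \<noteq> b" "e = {a,b}" using Kn_mem by blast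
  have via: "\<exists>ts. ts \<noteq> [] \<and> hd ts = st n 1 \<and> last ts = st n 1 \<and> successively ?R ts \<and> e \<in> \<Union>(set ts)"
    if T: "e \<in> T" "?R (st n w) T" "?R T (st n w)" "1 \<le> w" "w < n" for T w
  proof (cases "w = 1")
    case True
    show ?thesis using T True by (intro exI[of _ "[st n 1, T, st n 1]"]) auto
  next
    case False
    have "?R (st n 1) (st n w)" "?R (st n w) (st n 1)" using lm_st False T n4 by auto
    thus ?thesis using T by (intro exI[of _ "[st n 1, st n w, T, st n w, st n 1]"]) auto
  qed
  show "\<exists>ts. ts \<noteq> [] \<and> hd ts = st n 1 \<and> last ts = st n 1 \<and> successively ?R ts \<and> e \<in> \<Union>(set ts)"
  proof (cases "a = 0 \<or> b = 0")
    case True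
    then obtain c where c: "e = {0,c}" "0 < c" "c < n" using ab by (auto simp: insert_commute)
    show ?thesis
    proof (cases "c = 1")
      case False
      have "e \<in> st n 1" unfolding st_mem using c False by (intro exI[of _ c]) auto
      thus ?thesis by (intro exI[of _ "[st n 1]"]) auto
    next
      case True
      have "e \<in> st n 2" unfolding st_mem using c True n4 by (intro exI[of _ c]) auto
      moreover have "?R (st n 1) (st n 2)" "?R (st n 2) (st n 1)" using lm_st n4 by auto
      ultimately show ?thesis by (intro exI[of _ "[st n 1, st n 2, st n 1]"]) auto
    qed
  next
    case False
    have "e \<in> ex n b a" unfolding ex_def using ab by simp
    moreover have "?R (st n b) (ex n b a)" "?R (ex n b a) (st n b)"
      using lm_ex1[of b n a] lm_ex2[of b n a] ab False by auto
    ultimately show ?thesis using via[of "ex n b a" b] ab False by auto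
  qed
qed

theorem theorem3p2:
  fixes n :: nat
  assumes "n \<ge> 4"
  shows "mob (Kn_edges n) line_adj = n - 2"
proof -
  let ?M = "{S. mobile_gp_set (Kn_edges n) line_adj S}"
  have sub: "\<And>S. mobile_gp_set (Kn_edges n) line_adj S \<Longrightarrow> S \<subseteq> Kn_edges n"
    by (simp add: mobile_gp_set_def gp_set_def)
  have "?M \<subseteq> Pow (Kn_edges n)" using sub by auto
  hence fM: "finite ?M" by (rule finite_subset) (simp add: Kn_finite)
  have "st n 1 \<in> ?M" using lower[OF assms] by simp
  moreover have "card (st n 1) = n - 2" using card_st assms by simp
  ultimately have mem: "n - 2 \<in> card ` ?M" by (metis image_eqI)
  have ub: "\<forall>y \<in> card ` ?M. y \<le> n - 2" using upper[OF assms] by blast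
  show ?thesis unfolding mob_def by (rule Max_eqI) (use fM mem ub in auto)
qed

end
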